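(* Let $q,z,m$ be positive integers with $q\geq 2$ and $z<q$, and put $L=\lfloor\frac{q-1}{q-z}\rfloor$. Let rows be indexed by $\mathcal{F}=\{(a_0,\ldots,a_{m-1},\varepsilon): a_l\in\mathbb{Z}_q,\ \varepsilon\in\{0,\ldots,L-1\}\}$. Define the $Lq^m\times mq$ array $\mathbf{P}=(p_{\mathbf{a},(b,\delta)})$ with columns $(b,\delta)$, $b\in\mathbb{Z}_q$, $0\leq\delta<m$, by: $p_{\mathbf{a},(b,\delta)}=*$ if $a_\delta\in\{b,b-1,\ldots,b-(z-1)\}$, and otherwise $p_{\mathbf{a},(b,\delta)}=(a_0,\ldots,a_{\delta-1},\,b-\varepsilon(q-z),\,a_{\delta+1},\ldots,a_{m-1},\,a_\delta-b-1)$. Define the $Lq^m\times q$ array $\mathbf{C}=(c_{\mathbf{a},(b,m)})$ with columns $(b,m)$, $b\in\mathbb{Z}_q$, by: writing $\sigma=\sum_{l=0}^{m-1}a_l-\varepsilon(q-z)$, $c_{\mathbf{a},(b,m)}=*$ if $\sigma\in\{b,b+1,\ldots,b+(z-1)\}$, and otherwise $c_{\mathbf{a},(b,m)}=(a_0,\ldots,a_{m-1},\,b-\sigma-1)$. All arithmetic is modulo $q$. Then $\mathbf{H}=(\mathbf{P},\mathbf{C})$ (the columns of $\mathbf{P}$ followed by those of $\mathbf{C}$) is an $\big((m+1)q,\ Lq^m,\ zLq^{m-1},\ (q-z)q^m\big)$ placement delivery array. In particular the associated coded caching scheme has $\frac{M}{N}=\frac{z}{q}$ and rate $R=(q-z)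/L$.
   Context: A $(K,F,Z,S)$ placement delivery array (PDA) is an $F\times K$ array whose entries are either a special symbol $*$ or one of $S$ distinct non-star symbols (identified with $1,\ldots,S$), such that: (C1) $*$ appears exactly $Z$ times in each column; (C2) each of the $S$ symbols occurs at least once; (C3) for any two distinct entries $p_{j_1,k_1}=p_{j_2,k_2}=s$ with $s$ a non-star symbol, we have $j_1\neq j_2$, $k_1\neq k_2$, and $p_{j_1,k_2}=p_{j_2,k_1}=*$. A $(K,F,Z,S)$ PDA yields an $F$-division coded caching scheme for $K$ users with memory ratio $M/N=Z/F$ and rate $R=S/F$. The non-star symbols here are vectors in $\mathbb{Z}_q^{m+1}$. *)

theory Defs
  imports Complex_Main
begin

text \<open>A PDA is given by a row set, a column set and an entry function;
  the entry None stands for the star symbol, Some s for the non-star symbol s.\<close>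

definition is_PDA ::
  "'r set \<Rightarrow> 'c set \<Rightarrow> ('r \<Rightarrow> 'c \<Rightarrow> 's option) \<Rightarrow> nat \<Rightarrow> nat \<Rightarrow> nat \<Rightarrow> nat \<Rightarrow> bool" where
  "is_PDA Rows Cols p K F Z S \<longleftrightarrow>
     finite Rows \<and> finite Cols \<and> card Cols = K \<and> card Rows = F \<and>
     (\<forall>k\<in>Cols. card {j\<in>Rows. p j k = None} = Z) \<and>
     card {s. \<exists>j\<in>Rows. \<exists>k\<in>Cols. p j k = Some s} = S \<and>
     (\<forall>j1\<in>Rows. \<forall>j2\<in>Rows. \<forall>k1\<in>Cols. \<forall>k2\<in>Cols. \<forall>s.
        (j1, k1) \<noteq> (j2, k2) \<and> p j1 k1 = Some s \<and> p j2 k2 = Some s \<longrightarrow>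
        j1 \<noteq> j2 \<and> k1 \<noteq> k2 \<and> p j1 k2 = None \<and> p j2 k1 = None)"

definition L_par :: "nat \<Rightarrow> nat \<Rightarrow> nat" where
  "L_par q z = (q - 1) div (q - z)"

definition H_rows :: "nat \<Rightarrow> nat \<Rightarrow> nat \<Rightarrow> (int list \<times> nat) set" where
  "H_rows q z m = {(a, e). length a = m \<and> set a \<subseteq> {0..<int q} \<and> e < L_par q z}"

text \<open>Columns: (b, delta) with b in Z_q and delta \<le> m; delta < m are the columns of P,
  delta = m the columns of C.\<close>
definition H_cols :: "nat \<Rightarrow> nat \<Rightarrow> (int \<times> nat) set" where
  "H_cols q m = {(b, d). b \<in> {0..<int q} \<and> d \<le> m}"

definition H_arr :: "nat \<Rightarrow> nat \<Rightarrow> nat \<Rightarrow> (int list \<times> nat) \<Rightarrow> (int \<times> nat) \<Rightarrow> int list option" where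
  "H_arr q z m = (\<lambda>(a, e) (b, d).
     if d < m then
       (if (b - a ! d) mod int q < int z then None
        else Some (a[d := (b - int e * int (q - z)) mod int q] @ [(a ! d - b - 1) mod int q]))
     else
       (let \<sigma> = sum_list a - int e * int (q - z) in
        if (\<sigma> - b) mod int q < int z then None
        else Some (a @ [(b - \<sigma> - 1) mod int q])))"

end

theory Submission
  imports Defs
begin


lemma sum_list_upd_int: "k < length xs \<Longrightarrow> sum_list (xs[k := x]) = sum_list xs - xs ! k + (x::int)"
  by (induction xs arbitrary: k) (auto split: nat.splits)

lemma K1:
  assumes "e < L_par q z" "z < q"
  shows "e * (q - z) < z"
proof -
  have "Suc e * (q-z) \<le> L_par q z * (q-z)" using assms by (intro mult_le_mono1) simp
  also have "\<dots> \<le> q - 1" unfolding L_par_def using div_mult_mod_eq[of "q-1" "q-z"] by linarith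
  finally show ?thesis using assms by simp
qed

lemma K1i:
  assumes "e < L_par q z" "z < q"
  shows "int e * (int q - int z) < int z"
proof -
  have "e * (q - z) < z" by (rule K1[OF assms])
  then have "int (e * (q - z)) < int z" by linarith
  then show ?thesis using assms by (simp add: of_nat_diff)
qed

lemma K2:
  assumes "e < L_par q z" "e' < L_par q z" "z < q"
    and "(int e * (int q - int z)) mod int q = (int e' * (int q - int z)) mod int q"
  shows "e = e'"
proof -
  have a: "int e * (int q - int z) < int z" "int e' * (int q - int z) < int z"
    using K1i assms by auto
  have "int e * (int q - int z) = int e' * (int q - int z)"
    using assms(4) a assms(3) by (simp add: mod_pos_pos_trivial)
  then show ?thesis using assms(3) by simp
qed

lemma K3:
  fixes x :: int
  assumes "e < L_par q z" "e' < L_par q z" "z < q" "e \<noteq> e'"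
    and "int z \<le> x mod int q"
  shows "(x + (int e' - int e) * (int q - int z)) mod int q < int z"
proof -
  define c where "c = int q - int z"
  define r where "r = x mod int q"
  have c0: "c > 0" using assms(3) by (simp add: c_def)
  have a: "int e * c < int z" "int e' * c < int z"
    using K1i assms unfolding c_def by auto
  have r: "int z \<le> r" "r < int q" using assms(5) assms(3) by (auto simp: r_def)
  have eq: "(x + (int e' - int e) * c) mod int q = (r + (int e' - int e) * c) mod int q"
    by (simp add: r_def mod_add_left_eq)
  have "(x + (int e' - int e) * c) mod int q < int z"
  proof (cases "e < e'")
    case True
    have k1: "(int e' - int e) * c \<ge> c" using True c0 by (simp add: mult_le_cancel_right1)
    have k2: "(int e' - int e) * c \<le> int e' * c" using c0 by (simp add: mult_right_mono)
    have "(r + (int e' - int e) * c) mod int q = (r + (int e' - int e) * c - int q) mod int q"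
      using mod_add_self2[of "r + (int e' - int e) * c - int q" "int q"] by simp
    also have "\<dots> = r + (int e' - int e) * c - int q"
      using k1 k2 r a c_def assms(3) by (intro mod_pos_pos_trivial) linarith+
    finally show ?thesis using eq k2 r a by linarith
  next
    case False
    then have "e' < e" using assms(4) by simp
    then have "int e' - int e \<le> -1" by simp
    then have "(int e' - int e) * c \<le> (-1) * c" using c0 by (intro mult_right_mono) auto
    then have k1: "(int e' - int e) * c \<le> - c" by simp
    have k2: "(int e' - int e) * c \<ge> - (int e * c)" using c0 by (simp add: mult_right_mono left_diff_distrib)
    have "(r + (int e' - int e) * c) mod int q = r + (int e' - int e) * c"
      using k1 k2 r a c_def assms(3) by (intro mod_pos_pos_trivial) linarith+
    then show ?thesis using eq k1 r c_def by linarith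
  qed
  then show ?thesis by (simp add: c_def)
qed



lemma finI: "finite {x::int. 0 \<le> x \<and> x < Q \<and> P x}"
  by (rule finite_subset[of _ "{0..<Q}"]) auto

lemma card_shift:
  fixes Q Z s u :: int
  assumes "0 < Q" "0 \<le> Z" "Z \<le> Q" "u = 1 \<or> u = -1"
  shows "card {x\<in>{0..<Q}. (u*x + s) mod Q < Z} = nat Z"
proof -
  define f where "f x = (u*x + s) mod Q" for x
  have uu: "u * u = 1" using assms(4) by auto
  have inj: "inj_on f {0..<Q}"
  proof
    fix x y assume xy: "x \<in> {0..<Q}" "y \<in> {0..<Q}" "f x = f y"
    then have "Q dvd (u*x + s) - (u*y + s)" by (simp add: f_def mod_eq_dvd_iff)
    then have "Q dvd u*(x - y)" by (simp add: right_diff_distrib)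
    then have "Q dvd u * (u*(x - y))" by (rule dvd_mult)
    then have "Q dvd (x - y)" using uu by (simp add: mult.assoc[symmetric])
    then have "x mod Q = y mod Q" by (simp add: mod_eq_dvd_iff)
    then show "x = y" using xy by simp
  qed
  have img: "f ` {x\<in>{0..<Q}. f x < Z} = {0..<Z}"
  proof
    show "f ` {x\<in>{0..<Q}. f x < Z} \<subseteq> {0..<Z}" using assms(1) by (auto simp: f_def)
    show "{0..<Z} \<subseteq> f ` {x\<in>{0..<Q}. f x < Z}"
    proof
      fix y assume y: "y \<in> {0..<Z}"
      define x where "x = (u * (y - s)) mod Q"
      have "f x = (u * (u * (y - s)) + s) mod Q"
        unfolding f_def x_def by (metis mod_add_left_eq mod_mult_right_eq)
      also have "\<dots> = y mod Q" using uu by (simp add: mult.assoc[symmetric])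
      also have "\<dots> = y" using y assms by simp
      finally have fx: "f x = y" .
      have "x \<in> {0..<Q}" using assms(1) by (simp add: x_def)
      then show "y \<in> f ` {x\<in>{0..<Q}. f x < Z}" using fx y by force
    qed
  qed
  have "card {x\<in>{0..<Q}. f x < Z} = card (f ` {x\<in>{0..<Q}. f x < Z})"
    by (rule card_image[symmetric]) (rule inj_on_subset[OF inj], auto)
  then show ?thesis using img by (simp add: f_def)
qed

lemma card_lists_nth:
  assumes "finite A" "d < n"
  shows "card {a. set a \<subseteq> A \<and> length a = n \<and> P (a!d)} = card {x\<in>A. P x} * card A ^ (n - 1)"
  using assms(2)
proof (induction n arbitrary: d)
  case 0 then show ?case by simp
next
  case (Suc n)
  have fin: "finite {t. set t \<subseteq> A \<and> length t = n}" using finite_lists_length_eq[OF assms(1)] .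
  have inj: "inj_on (\<lambda>(x,t). x # t) S" for S :: "('a \<times> 'a list) set" by (auto simp: inj_on_def)
  show ?case
  proof (cases d)
    case 0
    have "{a. set a \<subseteq> A \<and> length a = Suc n \<and> P (a!d)} =
       (\<lambda>(x,t). x # t) ` ({x\<in>A. P x} \<times> {t. set t \<subseteq> A \<and> length t = n})"
      using 0 by (auto simp: length_Suc_conv image_iff)
    moreover have "card ((\<lambda>(x,t). x # t) ` ({x\<in>A. P x} \<times> {t. set t \<subseteq> A \<and> length t = n}))
       = card {x\<in>A. P x} * card {t. set t \<subseteq> A \<and> length t = n}"
      by (simp only: card_image[OF inj] card_cartesian_product)
    ultimately show ?thesis using card_lists_length_eq[OF assms(1), of n] by simp
  next
    case (Suc d')
    have eq: "{a. set a \<subseteq> A \<and> length a = Suc n \<and> P (a!d)} =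
       (\<lambda>(x,t). x # t) ` (A \<times> {t. set t \<subseteq> A \<and> length t = n \<and> P (t!d')})"
      using Suc by (auto simp: length_Suc_conv image_iff)
    have IH: "card {t. set t \<subseteq> A \<and> length t = n \<and> P (t!d')} = card {x\<in>A. P x} * card A ^ (n - 1)"
      using Suc.IH[of d'] Suc.prems Suc by simp
    have n1: "n \<ge> 1" using Suc.prems Suc by simp
    have "card {a. set a \<subseteq> A \<and> length a = Suc n \<and> P (a!d)}
       = card A * card {t. set t \<subseteq> A \<and> length t = n \<and> P (t!d')}"
      by (simp only: eq card_image[OF inj] card_cartesian_product)
    also have "\<dots> = card {x\<in>A. P x} * card A ^ (Suc n - 1)"
      using n1 IH by (cases n) auto
    finally show ?thesis .
  qed
qed

lemma card_lists_sum:
  fixes t :: int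
  assumes "0 < m" "z \<le> q" "0 < q"
  shows "card {a. set a \<subseteq> {0..<int q} \<and> length a = m \<and> (sum_list a - t) mod int q < int z} = z * q ^ (m - 1)"
proof -
  obtain n where n: "m = Suc n" using assms(1) by (cases m) auto
  define T where "T = {t'. set t' \<subseteq> {0..<int q} \<and> length t' = n}"
  have fin: "finite T" unfolding T_def using finite_lists_length_eq[of "{0..<int q}"] by simp
  have cT: "card T = q ^ n" unfolding T_def using card_lists_length_eq[of "{0..<int q}"] by simp
  have inj: "inj_on (\<lambda>(t',x). x # t') S" for S :: "(int list \<times> int) set" by (auto simp: inj_on_def)
  have eq: "{a. set a \<subseteq> {0..<int q} \<and> length a = m \<and> (sum_list a - t) mod int q < int z} =
     (\<lambda>(t',x). x # t') ` (SIGMA t':T. {x\<in>{0..<int q}. (1*x + (sum_list t' - t)) mod int q < int z})"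
    unfolding n T_def by (auto simp: length_Suc_conv image_iff algebra_simps)
  have "card (SIGMA t':T. {x\<in>{0..<int q}. (1*x + (sum_list t' - t)) mod int q < int z})
      = (\<Sum>t'\<in>T. card {x\<in>{0..<int q}. (1*x + (sum_list t' - t)) mod int q < int z})"
    using fin by (intro card_SigmaI) (simp_all add: finI)
  also have "\<dots> = (\<Sum>t'\<in>T. z)"
    using card_shift[of "int q" "int z" 1] assms by (intro sum.cong) auto
  finally have "card (SIGMA t':T. {x\<in>{0..<int q}. (1*x + (sum_list t' - t)) mod int q < int z}) = (\<Sum>t'\<in>T. z)" .
  then show ?thesis using eq card_image[OF inj] cT n by simp
qed



lemma eq_of_dvd:
  fixes x y Q :: int
  assumes "0 \<le> x" "x < Q" "0 \<le> y" "y < Q" "Q dvd x - y"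
  shows "x = y"
proof -
  have "x mod Q = y mod Q" using assms(5) by (simp add: mod_eq_dvd_iff)
  then show ?thesis using assms by simp
qed

lemma dvd_helper: "A = X mod Q \<Longrightarrow> B = X - A \<Longrightarrow> (Q::int) dvd B"
  by simp

lemma dvd_helper2: "A = X mod Q \<Longrightarrow> B = A - X \<Longrightarrow> (Q::int) dvd B"
  using dvd_minus_mod[of Q X] by (metis dvd_minus_iff minus_diff_eq)

lemma small_mod:
  assumes "e < L_par q z" "z < q" "Q = int q" "Q dvd y - int e * (int q - int z)"
  shows "y mod Q < int z"
proof -
  have a: "int e * (int q - int z) < int z" using K1i assms by auto
  have "y mod Q = (int e * (int q - int z)) mod Q" using assms(4) by (simp add: mod_eq_dvd_iff)
  also have "\<dots> = int e * (int q - int z)" using a assms by (intro mod_pos_pos_trivial) auto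
  finally show ?thesis using a by simp
qed

lemma PP_same:
  fixes a a' :: "int list" and b1 b2 :: int and q z :: nat
  defines "c \<equiv> int q - int z"
  assumes zq: "z < q" and eL: "e < L_par q z" "e' < L_par q z"
    and len: "length a = m" "length a' = m" and sa: "set a \<subseteq> {0..<int q}" "set a' \<subseteq> {0..<int q}"
    and b: "0 \<le> b1" "b1 < int q" "0 \<le> b2" "b2 < int q" and d: "d < m"
    and n1: "\<not> (b1 - a!d) mod int q < int z" and n2: "\<not> (b2 - a'!d) mod int q < int z"
    and Le: "a[d := (b1 - int e * c) mod int q] = a'[d := (b2 - int e' * c) mod int q]"
    and la: "(a!d - b1 - 1) mod int q = (a'!d - b2 - 1) mod int q"
    and ne: "(a, e, b1) \<noteq> (a', e', b2)"
  shows "(a, e) \<noteq> (a', e') \<and> b1 \<noteq> b2 \<and> (b2 - a!d) mod int q < int z \<and> (b1 - a'!d) mod int q < int z"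
proof -
  have oth: "a!l = a'!l" if "l < m" "l \<noteq> d" for l
    using arg_cong[OF Le, of "\<lambda>x. x!l"] that by simp
  have hd: "(b1 - int e * c) mod int q = (b2 - int e' * c) mod int q"
    using arg_cong[OF Le, of "\<lambda>x. x!d"] d len by simp
  have D1: "int q dvd (b1 - int e * c) - (b2 - int e' * c)" using hd by (simp add: mod_eq_dvd_iff)
  have D2: "int q dvd (a!d - b1 - 1) - (a'!d - b2 - 1)" using la by (simp add: mod_eq_dvd_iff)
  have ad: "0 \<le> a!d" "a!d < int q" "0 \<le> a'!d" "a'!d < int q"
    using subsetD[OF sa(1) nth_mem[of d a]] subsetD[OF sa(2) nth_mem[of d a']] d len by auto
  have ee: "e \<noteq> e'"
  proof
    assume "e = e'"
    with D1 have "int q dvd b1 - b2" by simp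
    then have bb: "b1 = b2" using b eq_of_dvd by blast
    with D2 have "int q dvd a!d - a'!d" by (simp add: algebra_simps)
    then have "a!d = a'!d" using ad eq_of_dvd by blast
    then have "a = a'" using oth len by (intro nth_equalityI) auto
    then show False using ne bb \<open>e = e'\<close> by simp
  qed
  have bne: "b1 \<noteq> b2"
  proof
    assume "b1 = b2"
    with D1 have "int q dvd int e' * c - int e * c" by (simp add: algebra_simps)
    then have "(int e' * c) mod int q = (int e * c) mod int q" by (simp add: mod_eq_dvd_iff)
    then have "(int e * c) mod int q = (int e' * c) mod int q" by simp
    then have "e = e'" by (rule K2[OF eL zq, folded c_def])
    then show False using ee by simp
  qed
  have "(b2 - a!d) mod int q = ((b1 - a!d) + (int e' - int e) * c) mod int q"
  proof -
    have "(b2 - a!d) - ((b1 - a!d) + (int e' - int e) * c) = - ((b1 - int e * c) - (b2 - int e' * c))"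
      by (simp add: algebra_simps)
    then have "int q dvd (b2 - a!d) - ((b1 - a!d) + (int e' - int e) * c)" using D1 by (metis dvd_minus_iff)
    then show ?thesis by (simp add: mod_eq_dvd_iff)
  qed
  also have "\<dots> < int z" unfolding c_def using K3[OF eL zq ee] n1 by simp
  finally have c1: "(b2 - a!d) mod int q < int z" .
  have "(b1 - a'!d) mod int q = ((b2 - a'!d) + (int e - int e') * c) mod int q"
  proof -
    have "(b1 - a'!d) - ((b2 - a'!d) + (int e - int e') * c) = ((b1 - int e * c) - (b2 - int e' * c))"
      by (simp add: algebra_simps)
    then have "int q dvd (b1 - a'!d) - ((b2 - a'!d) + (int e - int e') * c)" using D1 by (metis dvd_minus_iff)
    then show ?thesis by (simp add: mod_eq_dvd_iff)
  qed
  also have "\<dots> < int z" unfolding c_def using K3[OF eL(2) eL(1) zq] ee n2 by simp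
  finally have c2: "(b1 - a'!d) mod int q < int z" .
  show ?thesis using ee bne c1 c2 by simp
qed

lemma PP_diff:
  fixes a a' :: "int list" and b1 b2 :: int and q z :: nat
  defines "c \<equiv> int q - int z"
  assumes zq: "z < q" and eL: "e < L_par q z" "e' < L_par q z"
    and len: "length a = m" "length a' = m"
    and d: "d1 < m" "d2 < m" "d1 \<noteq> d2"
    and n1: "\<not> (b1 - a!d1) mod int q < int z"
    and Le: "a[d1 := (b1 - int e * c) mod int q] = a'[d2 := (b2 - int e' * c) mod int q]"
  shows "(a, e) \<noteq> (a', e') \<and> (b2 - a!d2) mod int q < int z \<and> (b1 - a'!d1) mod int q < int z"
proof -
  have h2: "a!d2 = (b2 - int e' * c) mod int q"
    using arg_cong[OF Le, of "\<lambda>x. x!d2"] d len by simp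
  have h1: "a'!d1 = (b1 - int e * c) mod int q"
    using arg_cong[OF Le, of "\<lambda>x. x!d1"] d len by simp
  have c1: "(b2 - a!d2) mod int q < int z"
    by (rule small_mod[OF eL(2) zq refl], rule dvd_helper[OF h2]) (simp add: c_def algebra_simps)
  have c2: "(b1 - a'!d1) mod int q < int z"
    by (rule small_mod[OF eL(1) zq refl], rule dvd_helper[OF h1]) (simp add: c_def algebra_simps)
  have "(a, e) \<noteq> (a', e')"
  proof
    assume "(a, e) = (a', e')"
    then have "(b1 - a!d1) mod int q < int z" using c2 by simp
    then show False using n1 by simp
  qed
  then show ?thesis using c1 c2 by simp
qed



lemma PC:
  fixes a a' :: "int list" and b1 b2 :: int and q z :: nat
  defines "c \<equiv> int q - int z"
  assumes zq: "z < q" and eL: "e < L_par q z" "e' < L_par q z"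
    and len: "length a = m" and d: "d1 < m"
    and n1: "\<not> (b1 - a!d1) mod int q < int z"
    and Le: "a[d1 := (b1 - int e * c) mod int q] = a'"
    and la: "(a!d1 - b1 - 1) mod int q = (b2 - (sum_list a' - int e' * c) - 1) mod int q"
  shows "(a, e) \<noteq> (a', e') \<and> (sum_list a - int e * c - b2) mod int q < int z \<and> (b1 - a'!d1) mod int q < int z"
proof -
  have h1: "a'!d1 = (b1 - int e * c) mod int q"
    using Le[symmetric] d len by simp
  have c2: "(b1 - a'!d1) mod int q < int z"
    by (rule small_mod[OF eL(1) zq refl], rule dvd_helper[OF h1]) (simp add: c_def algebra_simps)
  have D1: "int q dvd (b1 - int e * c) - a'!d1" using h1 by (simp add: mod_eq_dvd_iff)
  have D2: "int q dvd (a!d1 - b1 - 1) - (b2 - (sum_list a' - int e' * c) - 1)"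
    using la by (simp add: mod_eq_dvd_iff)
  have sa: "sum_list a' = sum_list a - a!d1 + a'!d1"
    using Le[symmetric] sum_list_upd_int[of d1 a] d len h1 by simp
  have "sum_list a - int e * c - b2 - int e' * c =
      ((a!d1 - b1 - 1) - (b2 - (sum_list a' - int e' * c) - 1)) + ((b1 - int e * c) - a'!d1)"
    using sa by (simp add: algebra_simps)
  then have "int q dvd (sum_list a - int e * c - b2) - int e' * c" using D1 D2 by (metis dvd_add)
  then have c1: "(sum_list a - int e * c - b2) mod int q < int z"
    using small_mod[OF eL(2) zq refl] c_def by simp
  have "(a, e) \<noteq> (a', e')"
  proof
    assume "(a, e) = (a', e')"
    then have "(b1 - a!d1) mod int q < int z" using c2 by simp
    then show False using n1 by simp
  qed
  then show ?thesis using c1 c2 by simp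
qed

lemma CC:
  fixes a :: "int list" and b1 b2 :: int and q z :: nat
  defines "c \<equiv> int q - int z"
  assumes zq: "z < q" and eL: "e < L_par q z" "e' < L_par q z"
    and b: "0 \<le> b1" "b1 < int q" "0 \<le> b2" "b2 < int q"
    and n1: "\<not> (sum_list a - int e * c - b1) mod int q < int z"
    and n2: "\<not> (sum_list a - int e' * c - b2) mod int q < int z"
    and la: "(b1 - (sum_list a - int e * c) - 1) mod int q = (b2 - (sum_list a - int e' * c) - 1) mod int q"
    and ne: "(e, b1) \<noteq> (e', b2)"
  shows "e \<noteq> e' \<and> b1 \<noteq> b2 \<and> (sum_list a - int e * c - b2) mod int q < int z
      \<and> (sum_list a - int e' * c - b1) mod int q < int z"
proof -
  define s where "s = sum_list a"
  have D: "int q dvd (b1 - (s - int e * c) - 1) - (b2 - (s - int e' * c) - 1)"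
    using la by (simp add: mod_eq_dvd_iff s_def)
  have ee: "e \<noteq> e'"
  proof
    assume "e = e'"
    with D have "int q dvd b1 - b2" by simp
    then have bb: "b1 = b2" using b eq_of_dvd by blast
    then show False using ne \<open>e = e'\<close> by simp
  qed
  have bne: "b1 \<noteq> b2"
  proof
    assume "b1 = b2"
    with D have "int q dvd int e * c - int e' * c" by (simp add: algebra_simps)
    then have "(int e * c) mod int q = (int e' * c) mod int q" by (simp add: mod_eq_dvd_iff)
    then have "e = e'" by (rule K2[OF eL zq, folded c_def])
    then show False using ee by simp
  qed
  have "(s - int e * c - b2) mod int q = ((s - int e * c - b1) + (int e' - int e) * c) mod int q"
  proof -
    have "(s - int e * c - b2) - ((s - int e * c - b1) + (int e' - int e) * c)
       = (b1 - (s - int e * c) - 1) - (b2 - (s - int e' * c) - 1)"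
      by (simp add: algebra_simps)
    then have "int q dvd (s - int e * c - b2) - ((s - int e * c - b1) + (int e' - int e) * c)" using D by (metis dvd_minus_iff)
    then show ?thesis by (simp add: mod_eq_dvd_iff)
  qed
  also have "\<dots> < int z" unfolding c_def using K3[OF eL zq ee] n1 by (simp add: s_def c_def)
  finally have c1: "(s - int e * c - b2) mod int q < int z" .
  have "(s - int e' * c - b1) mod int q = ((s - int e' * c - b2) + (int e - int e') * c) mod int q"
  proof -
    have "(s - int e' * c - b1) - ((s - int e' * c - b2) + (int e - int e') * c)
       = - ((b1 - (s - int e * c) - 1) - (b2 - (s - int e' * c) - 1))"
      by (simp add: algebra_simps)
    then have "int q dvd (s - int e' * c - b1) - ((s - int e' * c - b2) + (int e - int e') * c)" using D by (metis dvd_minus_iff)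
    then show ?thesis by (simp add: mod_eq_dvd_iff)
  qed
  also have "\<dots> < int z" unfolding c_def using K3[OF eL(2) eL(1) zq] ee n2 by (simp add: s_def c_def)
  finally have c2: "(s - int e' * c - b1) mod int q < int z" .
  show ?thesis using ee bne c1 c2 by (simp add: s_def)
qed



lemma arr_simp:
  assumes "z \<le> q"
  shows "H_arr q z m (a,e) (b,d) = (if d < m then
     (if (b - a!d) mod int q < int z then None
      else Some (a[d := (b - int e * (int q - int z)) mod int q] @ [(a!d - b - 1) mod int q]))
     else (if (sum_list a - int e * (int q - int z) - b) mod int q < int z then None
      else Some (a @ [(b - (sum_list a - int e * (int q - int z)) - 1) mod int q])))"
  using assms by (simp add: H_arr_def Let_def of_nat_diff)

lemma rows_eq: "H_rows q z m = {a. set a \<subseteq> {0..<int q} \<and> length a = m} \<times> {..<L_par q z}"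
  by (auto simp: H_rows_def)

lemma cols_eq: "H_cols q m = {0..<int q} \<times> {..m}"
  by (auto simp: H_cols_def)

lemma lastlem:
  fixes y Q :: int
  assumes "0 < Q" "\<not> y mod Q < Z"
  shows "(- y - 1) mod Q < Q - Z"
proof -
  have "(- y - 1) mod Q = (Q - 1 - y mod Q) mod Q"
  proof -
    have e: "(- y - 1) - (Q - 1 - y mod Q) = - ((y - y mod Q) + Q)" by simp
    have "Q dvd (- y - 1) - (Q - 1 - y mod Q)"
      unfolding e dvd_minus_iff by (intro dvd_add dvd_minus_mod dvd_refl)
    then show ?thesis by (simp only: mod_eq_dvd_iff)
  qed
  also have "\<dots> = Q - 1 - y mod Q"
  proof -
    have "0 \<le> y mod Q" "y mod Q < Q" using assms(1) by auto
    then show ?thesis by (intro mod_pos_pos_trivial) linarith+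
  qed
  finally show ?thesis using assms by simp
qed

lemma Lpos: "0 < z \<Longrightarrow> z < q \<Longrightarrow> 0 < L_par q z"
  unfolding L_par_def by (simp add: div_greater_zero_iff)



lemma star_P:
  assumes zq: "z < q" "0 < z" and d: "d < m" and b: "b \<in> {0..<int q}"
  shows "card {j\<in>H_rows q z m. H_arr q z m j (b, d) = None} = z * L_par q z * q ^ (m - 1)"
proof -
  have eq: "{j\<in>H_rows q z m. H_arr q z m j (b, d) = None} =
    {a. set a \<subseteq> {0..<int q} \<and> length a = m \<and> (\<lambda>x. (-1 * x + b) mod int q < int z) (a!d)} \<times> {..<L_par q z}"
    using zq d by (auto simp: rows_eq arr_simp split: if_splits)
  have "card {x\<in>{0..<int q}. (-1 * x + b) mod int q < int z} = z"
    using card_shift[of "int q" "int z" "-1" b] zq by simp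
  then have "card {a. set a \<subseteq> {0..<int q} \<and> length a = m \<and> (\<lambda>x. (-1 * x + b) mod int q < int z) (a!d)}
     = z * q ^ (m - 1)"
    using card_lists_nth[of "{0..<int q}" d m "\<lambda>x. (-1 * x + b) mod int q < int z"] d by simp
  then show ?thesis using eq by (simp add: card_cartesian_product)
qed

lemma star_C:
  assumes zq: "z < q" "0 < z" and m: "0 < m" and b: "b \<in> {0..<int q}"
  shows "card {j\<in>H_rows q z m. H_arr q z m j (b, m) = None} = z * L_par q z * q ^ (m - 1)"
proof -
  define B where "B e = {a. set a \<subseteq> {0..<int q} \<and> length a = m \<and>
      (sum_list a - (int e * (int q - int z) + b)) mod int q < int z}" for e
  have eq: "{j\<in>H_rows q z m. H_arr q z m j (b, m) = None} = prod.swap ` (SIGMA e:{..<L_par q z}. B e)"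
    using zq by (auto simp: rows_eq arr_simp B_def image_iff algebra_simps split: if_splits)
  have cB: "card (B e) = z * q ^ (m - 1)" for e
    unfolding B_def using card_lists_sum[of m z q] m zq by simp
  have finB: "finite (B e)" for e
    unfolding B_def by (rule finite_subset[OF _ finite_lists_length_eq[of "{0..<int q}" m]]) auto
  have "card (prod.swap ` (SIGMA e:{..<L_par q z}. B e)) = card (SIGMA e:{..<L_par q z}. B e)"
    by (rule card_image) (simp add: inj_on_def)
  also have "\<dots> = (\<Sum>e<L_par q z. card (B e))" using finB by simp
  also have "\<dots> = z * L_par q z * q ^ (m - 1)" using cB by simp
  finally show ?thesis using eq by simp
qed

lemma symbols:
  assumes zq: "z < q" "0 < z" and m: "0 < m"
  shows "{s. \<exists>j\<in>H_rows q z m. \<exists>k\<in>H_cols q m. H_arr q z m j k = Some s} =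
     (\<lambda>(t,r). t @ [r]) ` ({t. set t \<subseteq> {0..<int q} \<and> length t = m} \<times> {0..<int q - int z})"
    (is "?S = ?T")
proof
  show "?S \<subseteq> ?T"
  proof
    fix s assume "s \<in> ?S"
    then obtain j k where j0: "j \<in> H_rows q z m" and k0: "k \<in> H_cols q m"
      and h0: "H_arr q z m j k = Some s" by blast
    obtain a e where je: "j = (a,e)" by (cases j)
    obtain b d where kb: "k = (b,d)" by (cases k)
    have j: "(a,e) \<in> H_rows q z m" and k: "(b,d) \<in> H_cols q m"
      and h: "H_arr q z m (a,e) (b,d) = Some s" using j0 k0 h0 je kb by auto
    have a: "set a \<subseteq> {0..<int q}" "length a = m" and bq: "0 \<le> b" "b < int q" "d \<le> m"
      using j k by (auto simp: rows_eq cols_eq)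
    show "s \<in> ?T"
    proof (cases "d < m")
      case True
      with h zq have n: "\<not> (b - a!d) mod int q < int z"
        and s: "s = a[d := (b - int e * (int q - int z)) mod int q] @ [(a!d - b - 1) mod int q]"
        by (auto simp: arr_simp split: if_splits)
      have l: "(a!d - b - 1) mod int q < int q - int z"
        using lastlem[of "int q" "b - a!d" "int z"] n zq by simp
      have "set (a[d := (b - int e * (int q - int z)) mod int q]) \<subseteq> {0..<int q}"
        using set_update_subset_insert[of a d] a zq by fastforce
      then show ?thesis using s l a zq by (auto simp: image_iff)
    next
      case False
      with h zq have n: "\<not> (sum_list a - int e * (int q - int z) - b) mod int q < int z"
        and s: "s = a @ [(b - (sum_list a - int e * (int q - int z)) - 1) mod int q]"
        by (auto simp: arr_simp split: if_splits)
      have l: "(b - (sum_list a - int e * (int q - int z)) - 1) mod int q < int q - int z"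
        using lastlem[of "int q" "sum_list a - int e * (int q - int z) - b" "int z"] n zq by simp
      then show ?thesis using s a zq by (auto simp: image_iff)
    qed
  qed
  show "?T \<subseteq> ?S"
  proof
    fix s assume "s \<in> ?T"
    then obtain t r where t: "set t \<subseteq> {0..<int q}" "length t = m" and r: "0 \<le> r" "r < int q - int z"
      and s: "s = t @ [r]" by auto
    define a where "a = t[0 := (t!0 + r + 1) mod int q]"
    have t0: "0 \<le> t!0" "t!0 < int q" using subsetD[OF t(1) nth_mem[of 0 t]] t(2) m by auto
    have a0: "a!0 = (t!0 + r + 1) mod int q" using t m by (simp add: a_def)
    have ja: "(a, 0) \<in> H_rows q z m"
      using t zq Lpos[of z q] set_update_subset_insert[of t 0] by (fastforce simp: rows_eq a_def)
    have kb: "(t!0, 0) \<in> H_cols q m" using t0 by (simp add: cols_eq)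
    have "(t!0 - a!0) mod int q = (- r - 1) mod int q"
      by (simp only: mod_eq_dvd_iff) (rule dvd_helper[OF a0], simp)
    also have "\<dots> = int q - r - 1"
    proof -
      have "(- r - 1) mod int q = (int q - r - 1) mod int q"
        by (simp only: mod_eq_dvd_iff) simp
      also have "\<dots> = int q - r - 1" using r zq by (intro mod_pos_pos_trivial) auto
      finally show ?thesis .
    qed
    finally have ns: "\<not> (t!0 - a!0) mod int q < int z" using r by simp
    have "a[0 := (t!0 - int 0 * (int q - int z)) mod int q] = t"
      using t0 t m by (simp add: a_def)
    moreover have "(a!0 - t!0 - 1) mod int q = r"
    proof -
      have "(a!0 - t!0 - 1) mod int q = r mod int q"
        by (simp only: mod_eq_dvd_iff) (rule dvd_helper2[OF a0], simp)
      then show ?thesis using r zq by simp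
    qed
    ultimately have "H_arr q z m (a, 0) (t!0, 0) = Some s"
      using ns m zq s by (simp add: arr_simp)
    then show "s \<in> ?S" using ja kb by blast
  qed
qed



lemma C3_ord:
  assumes zq: "z < q" "0 < z"
    and j1: "(a,e) \<in> H_rows q z m" and j2: "(a',e') \<in> H_rows q z m"
    and k1: "(b1,d1) \<in> H_cols q m" and k2: "(b2,d2) \<in> H_cols q m"
    and ne: "((a,e),(b1,d1)) \<noteq> ((a',e'),(b2,d2))"
    and h1: "H_arr q z m (a,e) (b1,d1) = Some s" and h2: "H_arr q z m (a',e') (b2,d2) = Some s"
    and ord: "d1 < m \<or> d2 = m"
  shows "(a,e) \<noteq> (a',e') \<and> (b1,d1) \<noteq> (b2,d2) \<and> H_arr q z m (a,e) (b2,d2) = None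
         \<and> H_arr q z m (a',e') (b1,d1) = None"
proof -
  have zq': "z \<le> q" using zq by simp
  have A: "length a = m" "set a \<subseteq> {0..<int q}" "e < L_par q z"
    "length a' = m" "set a' \<subseteq> {0..<int q}" "e' < L_par q z"
    using j1 j2 by (auto simp: rows_eq)
  have B: "0 \<le> b1" "b1 < int q" "d1 \<le> m" "0 \<le> b2" "b2 < int q" "d2 \<le> m"
    using k1 k2 by (auto simp: cols_eq)
  note ar = arr_simp[OF zq']
  show ?thesis
  proof (cases "d1 < m")
    case T1: True
    from h1 T1 have n1: "\<not> (b1 - a!d1) mod int q < int z"
      and s1: "s = a[d1 := (b1 - int e * (int q - int z)) mod int q] @ [(a!d1 - b1 - 1) mod int q]"
      by (auto simp: ar split: if_splits)
    show ?thesis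
    proof (cases "d2 < m")
      case T2: True
      from h2 T2 have n2: "\<not> (b2 - a'!d2) mod int q < int z"
        and s2: "s = a'[d2 := (b2 - int e' * (int q - int z)) mod int q] @ [(a'!d2 - b2 - 1) mod int q]"
        by (auto simp: ar split: if_splits)
      have Le: "a[d1 := (b1 - int e * (int q - int z)) mod int q] = a'[d2 := (b2 - int e' * (int q - int z)) mod int q]"
        and la: "(a!d1 - b1 - 1) mod int q = (a'!d2 - b2 - 1) mod int q"
        using s1 s2 by auto
      show ?thesis
      proof (cases "d1 = d2")
        case True
        have ne': "(a, e, b1) \<noteq> (a', e', b2)" using ne True by auto
        have R: "(a, e) \<noteq> (a', e') \<and> b1 \<noteq> b2 \<and> (b2 - a!d1) mod int q < int z \<and> (b1 - a'!d1) mod int q < int z"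
          using PP_same[OF zq(1) A(3) A(6) A(1) A(4) A(2) A(5) B(1) B(2) B(4) B(5) T1 n1 _ _ _ ne']
            n2 Le la True by simp
        then show ?thesis using True T1 by (simp add: ar)
      next
        case False
        have R: "(a, e) \<noteq> (a', e') \<and> (b2 - a!d2) mod int q < int z \<and> (b1 - a'!d1) mod int q < int z"
          using PP_diff[OF zq(1) A(3) A(6) A(1) A(4) T1 T2 False n1 Le] .
        then show ?thesis using T1 T2 False by (simp add: ar)
      qed
    next
      case F2: False
      then have d2: "d2 = m" using B(6) by simp
      from h2 d2 have s2: "s = a' @ [(b2 - (sum_list a' - int e' * (int q - int z)) - 1) mod int q]"
        by (auto simp: ar split: if_splits)
      have Le: "a[d1 := (b1 - int e * (int q - int z)) mod int q] = a'"
        and la: "(a!d1 - b1 - 1) mod int q = (b2 - (sum_list a' - int e' * (int q - int z)) - 1) mod int q"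
        using s1 s2 by auto
      have R: "(a, e) \<noteq> (a', e') \<and> (sum_list a - int e * (int q - int z) - b2) mod int q < int z
          \<and> (b1 - a'!d1) mod int q < int z"
        using PC[OF zq(1) A(3) A(6) A(1) T1 n1 Le la] .
      then show ?thesis using T1 d2 by (simp add: ar)
    qed
  next
    case F1: False
    then have d1: "d1 = m" using B(3) by simp
    then have d2: "d2 = m" using ord by simp
    from h1 d1 have n1: "\<not> (sum_list a - int e * (int q - int z) - b1) mod int q < int z"
      and s1: "s = a @ [(b1 - (sum_list a - int e * (int q - int z)) - 1) mod int q]"
      by (auto simp: ar split: if_splits)
    from h2 d2 have n2: "\<not> (sum_list a' - int e' * (int q - int z) - b2) mod int q < int z"
      and s2: "s = a' @ [(b2 - (sum_list a' - int e' * (int q - int z)) - 1) mod int q]"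
      by (auto simp: ar split: if_splits)
    have aa: "a' = a" using s1 s2 by simp
    have la: "(b1 - (sum_list a - int e * (int q - int z)) - 1) mod int q
        = (b2 - (sum_list a - int e' * (int q - int z)) - 1) mod int q"
      using s1 s2 aa by simp
    have ne': "(e, b1) \<noteq> (e', b2)" using ne aa d1 d2 by auto
    have R: "e \<noteq> e' \<and> b1 \<noteq> b2 \<and> (sum_list a - int e * (int q - int z) - b2) mod int q < int z
      \<and> (sum_list a - int e' * (int q - int z) - b1) mod int q < int z"
      using CC[OF zq(1) A(3) A(6) B(1) B(2) B(4) B(5) n1 _ la ne'] n2 aa by simp
    then show ?thesis using d1 d2 aa by (simp add: ar)
  qed
qed

theorem theorem3:
  fixes q z m :: nat
  assumes "q \<ge> 2" and "0 < z" and "z < q" and "0 < m"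
  shows "is_PDA (H_rows q z m) (H_cols q m) (H_arr q z m)
           ((m + 1) * q) (L_par q z * q ^ m) (z * L_par q z * q ^ (m - 1)) ((q - z) * q ^ m)
       \<and> real (z * L_par q z * q ^ (m - 1)) / real (L_par q z * q ^ m) = real z / real q
       \<and> real ((q - z) * q ^ m) / real (L_par q z * q ^ m) = real (q - z) / real (L_par q z)"
proof -
  have zq: "z < q" "0 < z" using assms by auto
  have Lp: "0 < L_par q z" using Lpos[OF zq(2) zq(1)] .
  have qm: "q ^ m = q * q ^ (m - 1)" using assms(4) by (cases m) auto
  have finR: "finite (H_rows q z m)"
    unfolding rows_eq using finite_lists_length_eq[of "{0..<int q}" m] by simp
  have finC: "finite (H_cols q m)" unfolding cols_eq by simp
  have cC: "card (H_cols q m) = (m + 1) * q" unfolding cols_eq by (simp add: card_cartesian_product)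
  have cR: "card (H_rows q z m) = L_par q z * q ^ m"
    unfolding rows_eq using card_lists_length_eq[of "{0..<int q}" m] by (simp add: card_cartesian_product)
  have stars: "\<forall>k\<in>H_cols q m. card {j\<in>H_rows q z m. H_arr q z m j k = None} = z * L_par q z * q ^ (m - 1)"
  proof
    fix k assume k: "k \<in> H_cols q m"
    obtain b d where kb: "k = (b,d)" by (cases k)
    have b: "b \<in> {0..<int q}" "d \<le> m" using k kb by (auto simp: cols_eq)
    show "card {j\<in>H_rows q z m. H_arr q z m j k = None} = z * L_par q z * q ^ (m - 1)"
    proof (cases "d < m")
      case True then show ?thesis using star_P[OF zq True b(1)] kb by simp
    next
      case False then have "d = m" using b by simp
      then show ?thesis using star_C[OF zq assms(4) b(1)] kb by simp
    qed
  qed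
  have syms: "card {s. \<exists>j\<in>H_rows q z m. \<exists>k\<in>H_cols q m. H_arr q z m j k = Some s} = (q - z) * q ^ m"
  proof -
    have inj: "inj_on (\<lambda>(t,r). t @ [r]) ({t. set t \<subseteq> {0..<int q} \<and> length t = m} \<times> {0..<int q - int z})"
      by (auto simp: inj_on_def)
    have "card ((\<lambda>(t,r). t @ [r]) ` ({t. set t \<subseteq> {0..<int q} \<and> length t = m} \<times> {0..<int q - int z}))
        = card {t. set t \<subseteq> {0..<int q} \<and> length t = m} * card {0..<int q - int z}"
      by (simp only: card_image[OF inj] card_cartesian_product)
    also have "\<dots> = q ^ m * (q - z)"
      using card_lists_length_eq[of "{0..<int q}" m] zq by (simp add: nat_diff_distrib)
    finally show ?thesis using symbols[OF zq assms(4)] by simp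
  qed
  have c3: "\<forall>j1\<in>H_rows q z m. \<forall>j2\<in>H_rows q z m. \<forall>k1\<in>H_cols q m. \<forall>k2\<in>H_cols q m. \<forall>s.
        (j1, k1) \<noteq> (j2, k2) \<and> H_arr q z m j1 k1 = Some s \<and> H_arr q z m j2 k2 = Some s \<longrightarrow>
        j1 \<noteq> j2 \<and> k1 \<noteq> k2 \<and> H_arr q z m j1 k2 = None \<and> H_arr q z m j2 k1 = None"
  proof (intro ballI allI impI)
    fix j1 j2 k1 k2 s
    assume j: "j1 \<in> H_rows q z m" "j2 \<in> H_rows q z m" and k: "k1 \<in> H_cols q m" "k2 \<in> H_cols q m"
      and H: "(j1, k1) \<noteq> (j2, k2) \<and> H_arr q z m j1 k1 = Some s \<and> H_arr q z m j2 k2 = Some s"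
    obtain a e where j1e: "j1 = (a,e)" by (cases j1)
    obtain a' e' where j2e: "j2 = (a',e')" by (cases j2)
    obtain b1 d1 where k1e: "k1 = (b1,d1)" by (cases k1)
    obtain b2 d2 where k2e: "k2 = (b2,d2)" by (cases k2)
    have dm: "d1 \<le> m" "d2 \<le> m" using k k1e k2e by (auto simp: cols_eq)
    show "j1 \<noteq> j2 \<and> k1 \<noteq> k2 \<and> H_arr q z m j1 k2 = None \<and> H_arr q z m j2 k1 = None"
    proof (cases "d1 < m \<or> d2 = m")
      case True
      then show ?thesis using C3_ord[OF zq, of a e m a' e' b1 d1 b2 d2 s] j k H j1e j2e k1e k2e by auto
    next
      case False
      then have "d2 < m \<or> d1 = m" using dm by auto
      then show ?thesis using C3_ord[OF zq, of a' e' m a e b2 d2 b1 d1 s] j k H j1e j2e k1e k2e by auto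
    qed
  qed
  have pda: "is_PDA (H_rows q z m) (H_cols q m) (H_arr q z m)
           ((m + 1) * q) (L_par q z * q ^ m) (z * L_par q z * q ^ (m - 1)) ((q - z) * q ^ m)"
    unfolding is_PDA_def using finR finC cC cR stars syms c3 by blast
  have r1: "real (z * L_par q z * q ^ (m - 1)) / real (L_par q z * q ^ m) = real z / real q"
    using Lp zq unfolding qm by (simp add: field_simps)
  have r2: "real ((q - z) * q ^ m) / real (L_par q z * q ^ m) = real (q - z) / real (L_par q z)"
    using Lp zq by (simp add: field_simps)
  show ?thesis using pda r1 r2 by blast
qed

end
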